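(* Let $P\in\mathfrak N_2$ and let $(k,U,s,t)$ be a retractive up-split of $P$ with $S=s[P(0\to k)\setminus U]$ and $T=t[P(k+1\to h_P)]$. There exists a retraction $r$ of $P$ whose image is the induced subposet $S\cup T$, forming the ordinal sum $S\oplus T$, with $r(x)=s(x)$ for $x\in P(0\to k)\setminus U$, $r(x)\in T$ for $x\in U$, and $r(x)=t(x)$ for $x\in P(k+1\to h_P)$, if and only if $$S(h_S) < T(0) \quad\text{and}\quad \forall\, u\in U\ \exists\, v\in T(0):\ u\not< p\text{ for all }p\in t^{-1}(v).$$
   Context: All posets are finite. For a poset $P$ let $h_P$ be its height. The level sets are $P(0)=\min P$ and $P(k+1)=\min\big(P\setminus\bigcup_{i=0}^k P(i)\big)$. Write $P(k\to\ell)=\bigcup_{i=k}^{\ell}P(i)$ and identify subsets with induced subposets. For $A,B\subseteq P$, $A<B$ means $a<b$ for all $a\in A,b\in B$. A retraction of $P$ is an idempotent order-preserving map $r:P\to P$; its image is a retract. A 6-crown is $x_0<y_0>x_1<y_1>x_2<y_2>x_0$ with no other comparabilities. Type $3C$: three disjoint 2-element chains, no further comparabilities. A 4-crown stack is a poset $Q$ of height $\ge1$ all of whose consecutive level pairs $Q(i)\cup Q(i+1)$ are isomorphic to the ordinal sum of two 2-element antichains (an ordinal sum of 2-element antichains). A section of width three is a poset $P$ of height $h_P\ge1$ with carrier $\{c_{k,j}: k\in[0,h_P], j\in\{0,1,2\}\}$ such that: $c_{0,j}<\dots<c_{h_P,j}$ for each $j$; each $\{c_{k,0},c_{k,1},c_{k,2}\}$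 is an antichain; $c_{k,i}<c_{\ell,j}\Rightarrow c_{k,i+1}<c_{\ell,j+1}$ (indices mod 3); and no $P(k)\cup P(k+1)$ is the ordinal sum of two 3-antichains. It is nice if for all $x<y$: $\{z:z>x\}\not\subseteq\{z:z\ge y\}$ and $\{z:z<y\}\not\subseteq\{z:z\le x\}$. $\mathfrak N_2$ is the class of nice sections of width three with height $\ge2$ and horizon 2, i.e. $P(k)<P(\ell)$ whenever $\ell\ge k+2$, with 2 the smallest such integer. For $P\in\mathfrak N_2$, a retractive up-split is a quadruple $(k,U,s,t)$ with $k\in[0,h_P-1]$, $U\subset P(0\to k)$, $s:P(0\to k)\setminus U\to S$ a retraction and $t:P(k+1\to h_P)\to T$ a retraction, where $S,T$ are each a 2-element antichain or a 4-crown stack. $S(\cdot)$ and $T(\cdot)$ denote the level sets of $S$ and $T$. *)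

theory Defs
  imports Main
begin

definition lt :: "('a \<Rightarrow> 'a \<Rightarrow> bool) \<Rightarrow> 'a \<Rightarrow> 'a \<Rightarrow> bool" where
  "lt le x y \<longleftrightarrow> le x y \<and> x \<noteq> y"

definition partial_order_on_set :: "'a set \<Rightarrow> ('a \<Rightarrow> 'a \<Rightarrow> bool) \<Rightarrow> bool" where
  "partial_order_on_set A le \<longleftrightarrow>
     (\<forall>x\<in>A. le x x) \<and>
     (\<forall>x\<in>A. \<forall>y\<in>A. le x y \<and> le y x \<longrightarrow> x = y) \<and>
     (\<forall>x\<in>A. \<forall>y\<in>A. \<forall>z\<in>A. le x y \<and> le y z \<longrightarrow> le x z)"

definition mins :: "'a set \<Rightarrow> ('a \<Rightarrow> 'a \<Rightarrow> bool) \<Rightarrow> 'a set" where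
  "mins A le = {x\<in>A. \<not> (\<exists>y\<in>A. lt le y x)}"

fun rest :: "'a set \<Rightarrow> ('a \<Rightarrow> 'a \<Rightarrow> bool) \<Rightarrow> nat \<Rightarrow> 'a set" where
  "rest A le 0 = A"
| "rest A le (Suc k) = rest A le k - mins (rest A le k) le"

definition level :: "'a set \<Rightarrow> ('a \<Rightarrow> 'a \<Rightarrow> bool) \<Rightarrow> nat \<Rightarrow> 'a set" where
  "level A le k = mins (rest A le k) le"

definition levels_between :: "'a set \<Rightarrow> ('a \<Rightarrow> 'a \<Rightarrow> bool) \<Rightarrow> nat \<Rightarrow> nat \<Rightarrow> 'a set" where
  "levels_between A le a b = (\<Union>i\<in>{a..b}. level A le i)"

definition is_chain :: "'a set \<Rightarrow> ('a \<Rightarrow> 'a \<Rightarrow> bool) \<Rightarrow> 'a set \<Rightarrow> bool" where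
  "is_chain A le C \<longleftrightarrow> C \<subseteq> A \<and> (\<forall>x\<in>C. \<forall>y\<in>C. le x y \<or> le y x)"

definition height :: "'a set \<Rightarrow> ('a \<Rightarrow> 'a \<Rightarrow> bool) \<Rightarrow> nat" where
  "height A le = Max {card C - 1 | C. is_chain A le C \<and> C \<noteq> {}}"

definition antichain :: "('a \<Rightarrow> 'a \<Rightarrow> bool) \<Rightarrow> 'a set \<Rightarrow> bool" where
  "antichain le X \<longleftrightarrow> (\<forall>x\<in>X. \<forall>y\<in>X. le x y \<longrightarrow> x = y)"

definition set_less :: "('a \<Rightarrow> 'a \<Rightarrow> bool) \<Rightarrow> 'a set \<Rightarrow> 'a set \<Rightarrow> bool" where
  "set_less le X Y \<longleftrightarrow> (\<forall>x\<in>X. \<forall>y\<in>Y. lt le x y)"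

definition ordsum_two_antichains :: "('a \<Rightarrow> 'a \<Rightarrow> bool) \<Rightarrow> 'a set \<Rightarrow> nat \<Rightarrow> bool" where
  "ordsum_two_antichains le B n \<longleftrightarrow>
     (\<exists>X Y. B = X \<union> Y \<and> X \<inter> Y = {} \<and> card X = n \<and> card Y = n \<and>
            antichain le X \<and> antichain le Y \<and> set_less le X Y)"

definition retraction :: "'a set \<Rightarrow> ('a \<Rightarrow> 'a \<Rightarrow> bool) \<Rightarrow> ('a \<Rightarrow> 'a) \<Rightarrow> bool" where
  "retraction X le r \<longleftrightarrow>
     (\<forall>x\<in>X. r x \<in> X) \<and> (\<forall>x\<in>X. r (r x) = r x) \<and>
     (\<forall>x\<in>X. \<forall>y\<in>X. le x y \<longrightarrow> le (r x) (r y))"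

definition two_antichain :: "('a \<Rightarrow> 'a \<Rightarrow> bool) \<Rightarrow> 'a set \<Rightarrow> bool" where
  "two_antichain le S \<longleftrightarrow> card S = 2 \<and> antichain le S"

definition crown4_stack :: "('a \<Rightarrow> 'a \<Rightarrow> bool) \<Rightarrow> 'a set \<Rightarrow> bool" where
  "crown4_stack le Q \<longleftrightarrow> finite Q \<and> Q \<noteq> {} \<and> height Q le \<ge> 1 \<and>
     (\<forall>i < height Q le. ordsum_two_antichains le (level Q le i \<union> level Q le (Suc i)) 2)"

text \<open>Carrier {c_{k,j} : k in [0,h], j in {0,1,2}}, with c_{k,j} represented as (k,j).\<close>
definition carrier3 :: "nat \<Rightarrow> (nat \<times> nat) set" where
  "carrier3 h = {(k, j). k \<le> h \<and> j < 3}"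

definition section3 :: "nat \<Rightarrow> (nat \<times> nat \<Rightarrow> nat \<times> nat \<Rightarrow> bool) \<Rightarrow> bool" where
  "section3 h le \<longleftrightarrow>
     partial_order_on_set (carrier3 h) le \<and>
     h \<ge> 1 \<and> height (carrier3 h) le = h \<and>
     (\<forall>k < h. \<forall>j < 3. lt le (k, j) (Suc k, j)) \<and>
     (\<forall>k \<le> h. antichain le {(k, 0), (k, 1), (k, 2)}) \<and>
     (\<forall>k \<le> h. \<forall>l \<le> h. \<forall>i < 3. \<forall>j < 3.
        lt le (k, i) (l, j) \<longrightarrow> lt le (k, (i + 1) mod 3) (l, (j + 1) mod 3)) \<and>
     (\<forall>k. \<not> ordsum_two_antichains le
              (level (carrier3 h) le k \<union> level (carrier3 h) le (Suc k)) 3)"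

definition nice :: "'a set \<Rightarrow> ('a \<Rightarrow> 'a \<Rightarrow> bool) \<Rightarrow> bool" where
  "nice A le \<longleftrightarrow>
     (\<forall>x\<in>A. \<forall>y\<in>A. lt le x y \<longrightarrow>
        \<not> ({z\<in>A. lt le x z} \<subseteq> {z\<in>A. le y z}) \<and>
        \<not> ({z\<in>A. lt le z y} \<subseteq> {z\<in>A. le z x}))"

definition has_horizon :: "'a set \<Rightarrow> ('a \<Rightarrow> 'a \<Rightarrow> bool) \<Rightarrow> nat \<Rightarrow> bool" where
  "has_horizon A le n \<longleftrightarrow>
     (\<forall>k l. k + n \<le> l \<longrightarrow> set_less le (level A le k) (level A le l))"

definition horizon :: "'a set \<Rightarrow> ('a \<Rightarrow> 'a \<Rightarrow> bool) \<Rightarrow> nat" where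
  "horizon A le = (LEAST n. has_horizon A le n)"

definition N2 :: "nat \<Rightarrow> (nat \<times> nat \<Rightarrow> nat \<times> nat \<Rightarrow> bool) \<Rightarrow> bool" where
  "N2 h le \<longleftrightarrow> section3 h le \<and> nice (carrier3 h) le \<and> h \<ge> 2 \<and>
     horizon (carrier3 h) le = 2"

definition retractive_up_split ::
  "nat \<Rightarrow> (nat \<times> nat \<Rightarrow> nat \<times> nat \<Rightarrow> bool) \<Rightarrow> nat \<Rightarrow> (nat \<times> nat) set
    \<Rightarrow> (nat \<times> nat \<Rightarrow> nat \<times> nat) \<Rightarrow> (nat \<times> nat \<Rightarrow> nat \<times> nat) \<Rightarrow> bool" where
  "retractive_up_split h le k U s t \<longleftrightarrow>
     (let P = carrier3 h;
          D = levels_between P le 0 k - U;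
          E = levels_between P le (Suc k) h;
          S = s ` D; T = t ` E
      in k \<le> h - 1 \<and> U \<subseteq> levels_between P le 0 k \<and>
         retraction D le s \<and> retraction E le t \<and>
         (two_antichain le S \<or> crown4_stack le S) \<and>
         (two_antichain le T \<or> crown4_stack le T))"

end

theory Submission imports Defs begin

lemma rest_subset: "rest A le n \<subseteq> A"
  by (induct n) auto

lemma rest_antimono: "m \<le> n \<Longrightarrow> rest A le n \<subseteq> rest A le m"
  by (rule lift_Suc_antimono_le[of "rest A le"]) auto

lemma level_subset_rest: "level A le n \<subseteq> rest A le n"
  unfolding level_def mins_def by auto

lemma level_subset: "level A le n \<subseteq> A"
  using level_subset_rest[of A le n] rest_subset[of A le n] by (rule subset_trans)

lemma level_lt:
  assumes "x \<in> level A le i" "y \<in> level A le j" "lt le x y" shows "i < j"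
proof (rule ccontr)
  assume "\<not> i < j"
  then have "rest A le i \<subseteq> rest A le j" by (intro rest_antimono) simp
  then have "x \<in> rest A le j" using assms(1) level_subset_rest[of A le i] by blast
  with assms(2,3) show False unfolding level_def mins_def by blast
qed

lemma level_disj_lt:
  assumes "x \<in> level A le i" "i < j" shows "x \<notin> level A le j"
proof
  assume "x \<in> level A le j"
  then have "x \<in> rest A le j" using level_subset_rest[of A le j] by blast
  moreover have "rest A le j \<subseteq> rest A le (Suc i)" using assms(2) by (intro rest_antimono) simp
  ultimately have "x \<in> rest A le i - level A le i" by (auto simp: level_def)
  with assms(1) show False by blast
qed

lemma level_disj:
  assumes "x \<in> level A le i" "x \<in> level A le j" shows "i = j"
proof (rule ccontr)
  assume "i \<noteq> j"
  then consider "i < j" | "j < i" by linarith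
  then show False using level_disj_lt[of x A le i j] level_disj_lt[of x A le j i] assms by cases blast+
qed

lemma lt_trans:
  assumes "partial_order_on_set A le" "x \<in> A" "y \<in> A" "z \<in> A" "lt le x y" "lt le y z"
  shows "lt le x z"
proof -
  have tr: "le x y \<Longrightarrow> le y z \<Longrightarrow> le x z" using assms(1-4) unfolding partial_order_on_set_def by blast
  have an: "le x y \<Longrightarrow> le y x \<Longrightarrow> x = y" using assms(1-3) unfolding partial_order_on_set_def by blast
  show ?thesis using assms(5,6) tr an unfolding lt_def by blast
qed

lemma le_lt_le:
  assumes "partial_order_on_set A le" "x \<in> A" "y \<in> A" "z \<in> A" "w \<in> A"
    "le x y" "lt le y z" "le z w"
  shows "lt le x w"
proof -
  have tr: "\<And>a b c. a \<in> A \<Longrightarrow> b \<in> A \<Longrightarrow> c \<in> A \<Longrightarrow> le a b \<Longrightarrow> le b c \<Longrightarrow> le a c"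
    using assms(1) unfolding partial_order_on_set_def by blast
  have an: "\<And>a b. a \<in> A \<Longrightarrow> b \<in> A \<Longrightarrow> le a b \<Longrightarrow> le b a \<Longrightarrow> a = b"
    using assms(1) unfolding partial_order_on_set_def by blast
  have xz: "le x z" using tr[OF assms(2,3,4) assms(6)] assms(7) unfolding lt_def by blast
  have xw: "le x w" using tr[OF assms(2,4,5) xz assms(8)] .
  have "x \<noteq> w"
  proof
    assume "x = w"
    then have "le z x" using assms(8) by simp
    then have "le z y" using tr[OF assms(4,2,3) _ assms(6)] by blast
    then have "y = z" using an[OF assms(3,4)] assms(7) unfolding lt_def by blast
    then show False using assms(7) unfolding lt_def by simp
  qed
  then show ?thesis using xw unfolding lt_def by simp
qed

lemma po_subset: "partial_order_on_set A le \<Longrightarrow> B \<subseteq> A \<Longrightarrow> partial_order_on_set B le"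
  unfolding partial_order_on_set_def by blast

lemma mins_nonempty:
  assumes "finite B" "B \<noteq> {}" "B \<subseteq> A" "partial_order_on_set A le"
  shows "mins B le \<noteq> {}"
proof -
  define f where "f x = card {y\<in>B. lt le y x}" for x
  obtain x0 where "x0 \<in> B" using assms(2) by blast
  then obtain x where x: "x \<in> B" and xmin: "\<And>y. y \<in> B \<Longrightarrow> f x \<le> f y"
    using ex_has_least_nat[of "\<lambda>x. x \<in> B" x0 f] by blast
  have "x \<in> mins B le"
  proof (unfold mins_def, safe intro!: x)
    fix y assume y: "y \<in> B" "lt le y x"
    have sub: "{z\<in>B. lt le z y} \<subset> {z\<in>B. lt le z x}"
    proof
      show "{z\<in>B. lt le z y} \<subseteq> {z\<in>B. lt le z x}"
        using lt_trans[OF assms(4)] y x assms(3) by blast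
      have "\<not> lt le y y" by (simp add: lt_def)
      then show "{z\<in>B. lt le z y} \<noteq> {z\<in>B. lt le z x}" using y by blast
    qed
    have "f y < f x" unfolding f_def
      by (rule psubset_card_mono) (use assms(1) sub in auto)
    with xmin[OF y(1)] show False by simp
  qed
  then show ?thesis by blast
qed

lemma level_Suc_below:
  assumes "y \<in> level A le (Suc n)" shows "\<exists>z\<in>level A le n. lt le z y"
proof -
  have y: "y \<in> rest A le n" "y \<notin> mins (rest A le n) le"
    using assms level_subset_rest[of A le "Suc n"] by (auto simp: level_def)
  then obtain z where z: "z \<in> rest A le n" "lt le z y" unfolding mins_def by blast
  show ?thesis
  proof (cases "z \<in> level A le n")
    case True then show ?thesis using z by blast
  next
    case False
    then have "z \<in> rest A le (Suc n)" using z by (simp add: level_def)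
    with assms z show ?thesis unfolding level_def mins_def by auto
  qed
qed

lemma chain_exists:
  assumes po: "partial_order_on_set A le"
  shows "y \<in> level A le n \<Longrightarrow> \<exists>C. is_chain A le C \<and> finite C \<and> card C = Suc n \<and> (\<forall>c\<in>C. le c y) \<and> y \<in> C"
proof (induct n arbitrary: y)
  case 0
  have yA: "y \<in> A" using 0 level_subset[of A le 0] by blast
  then have "le y y" using po unfolding partial_order_on_set_def by blast
  then show ?case using yA unfolding is_chain_def by (intro exI[of _ "{y}"]) auto
next
  case (Suc n)
  obtain z where z: "z \<in> level A le n" "lt le z y" using level_Suc_below[OF Suc.prems] by blast
  obtain C where C: "is_chain A le C" "finite C" "card C = Suc n" "\<forall>c\<in>C. le c z" "z \<in> C"
    using Suc.hyps[OF z(1)] by blast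
  have yA: "y \<in> A" using Suc.prems level_subset[of A le "Suc n"] by blast
  have zA: "z \<in> A" using z(1) level_subset[of A le n] by blast
  have CA: "C \<subseteq> A" using C(1) unfolding is_chain_def by blast
  have cy: "\<forall>c\<in>C. le c y"
    using C(4) z(2) CA zA yA po unfolding partial_order_on_set_def lt_def by blast
  have yC: "y \<notin> C"
  proof
    assume "y \<in> C"
    then have "le y z" using C(4) by blast
    with z(2) yA zA po show False unfolding partial_order_on_set_def lt_def by blast
  qed
  have yy: "le y y" using yA po unfolding partial_order_on_set_def by blast
  show ?case
    apply (rule exI[of _ "insert y C"])
    using C yC cy yA yy unfolding is_chain_def by auto
qed

lemma height_ge:
  assumes "finite A" "partial_order_on_set A le" "level A le n \<noteq> {}"
  shows "n \<le> height A le"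
proof -
  obtain y where "y \<in> level A le n" using assms(3) by blast
  then obtain C where C: "is_chain A le C" "finite C" "card C = Suc n" "y \<in> C"
    using chain_exists[OF assms(2)] by blast
  have fin: "finite {card C - 1 | C. is_chain A le C \<and> C \<noteq> {}}"
  proof (rule finite_subset)
    show "{card C - 1 | C. is_chain A le C \<and> C \<noteq> {}} \<subseteq> (\<lambda>C. card C - 1) ` Pow A"
      unfolding is_chain_def by blast
  qed (use assms(1) in simp)
  have "n \<in> {card C - 1 | C. is_chain A le C \<and> C \<noteq> {}}" using C by force
  then show ?thesis unfolding height_def using fin by (rule Max_ge[rotated])
qed

lemma rest_beyond_empty:
  assumes "finite A" "partial_order_on_set A le" "height A le < m"
  shows "rest A le m = {}"
proof -
  have "rest A le (Suc (height A le)) = {}"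
  proof (rule ccontr)
    assume ne: "rest A le (Suc (height A le)) \<noteq> {}"
    have "level A le (Suc (height A le)) \<noteq> {}" unfolding level_def
      by (rule mins_nonempty[OF _ ne rest_subset assms(2)]) (rule finite_subset[OF rest_subset assms(1)])
    from height_ge[OF assms(1,2) this] show False by simp
  qed
  moreover have "rest A le m \<subseteq> rest A le (Suc (height A le))" using assms(3) by (intro rest_antimono) simp
  ultimately show ?thesis by blast
qed

lemma level_beyond_empty:
  assumes "finite A" "partial_order_on_set A le" "height A le < m"
  shows "level A le m = {}"
  using rest_beyond_empty[OF assms] level_subset_rest[of A le m] by blast

lemma cover_aux: "x \<in> A \<Longrightarrow> x \<notin> rest A le n \<Longrightarrow> \<exists>m<n. x \<in> level A le m"
proof (induct n)
  case 0 then show ?case by simp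
next
  case (Suc n)
  show ?case
  proof (cases "x \<in> rest A le n")
    case True
    then have "x \<in> level A le n" using Suc.prems by (simp add: level_def)
    then show ?thesis by blast
  next
    case False then show ?thesis using Suc by (meson less_Suc_eq)
  qed
qed

lemma cover:
  assumes "finite A" "partial_order_on_set A le" "x \<in> A"
  shows "\<exists>i \<le> height A le. x \<in> level A le i"
proof -
  have "x \<notin> rest A le (Suc (height A le))" using rest_beyond_empty[OF assms(1,2), of "Suc (height A le)"] by blast
  from cover_aux[OF assms(3) this] obtain m where "m < Suc (height A le)" "x \<in> level A le m" by blast
  then show ?thesis by (intro exI[of _ m]) simp
qed

lemma levels_between_iff: "x \<in> levels_between A le a b \<longleftrightarrow> (\<exists>i. a \<le> i \<and> i \<le> b \<and> x \<in> level A le i)"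
  unfolding levels_between_def by auto

lemma levels_between_subset: "levels_between A le a b \<subseteq> A"
  unfolding levels_between_def using level_subset[of A le] by blast

lemma antichain_level0: "antichain le Q \<Longrightarrow> level Q le 0 = Q"
  unfolding level_def mins_def lt_def antichain_def by auto

lemma antichain_height:
  assumes "antichain le Q" "Q \<noteq> {}" "partial_order_on_set Q le"
  shows "height Q le = 0"
proof -
  have "{card C - 1 | C. is_chain Q le C \<and> C \<noteq> {}} = {0}"
  proof (rule equalityI)
    show "{card C - 1 | C. is_chain Q le C \<and> C \<noteq> {}} \<subseteq> {0}"
    proof clarify
    fix C assume C: "is_chain Q le C" "C \<noteq> {}"
    then obtain c where c: "c \<in> C" by blast
    have "C = {c}" using C c assms(1) unfolding is_chain_def antichain_def by blast
    then show "card C - 1 = 0" by simp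
    qed
  next
    obtain q where q: "q \<in> Q" using assms(2) by blast
    then have "le q q" using assms(3) unfolding partial_order_on_set_def by blast
    then have "is_chain Q le {q}" using q unfolding is_chain_def by auto
    then have "card {q} - 1 \<in> {card C - 1 | C. is_chain Q le C \<and> C \<noteq> {}}" by blast
    then show "{0} \<subseteq> {card C - 1 | C. is_chain Q le C \<and> C \<noteq> {}}" by simp
  qed
  then show ?thesis unfolding height_def by simp
qed

lemma crown_step:
  assumes "crown4_stack le Q" "i < height Q le"
  shows "set_less le (level Q le i) (level Q le (Suc i)) \<and> card (level Q le i) = 2 \<and> card (level Q le (Suc i)) = 2"
proof -
  let ?A = "level Q le i" and ?B = "level Q le (Suc i)"
  obtain X Y where XY: "?A \<union> ?B = X \<union> Y" "X \<inter> Y = {}" "card X = 2" "card Y = 2"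
    "set_less le X Y"
    using assms unfolding crown4_stack_def ordsum_two_antichains_def by blast
  have Xne: "X \<noteq> {}" and Yne: "Y \<noteq> {}" using XY(3,4) by auto
  have XA: "X \<subseteq> ?A"
  proof
    fix x assume x: "x \<in> X"
    obtain y where y: "y \<in> Y" using Yne by blast
    have lxy: "lt le x y" using XY(5) x y unfolding set_less_def by blast
    have "x \<in> ?A \<union> ?B" "y \<in> ?A \<union> ?B" using XY(1) x y by blast+
    then show "x \<in> ?A"
      using level_lt[OF _ _ lxy, of Q "Suc i" i] level_lt[OF _ _ lxy, of Q "Suc i" "Suc i"] by auto
  qed
  have YB: "Y \<subseteq> ?B"
  proof
    fix y assume y: "y \<in> Y"
    obtain x where x: "x \<in> X" using Xne by blast
    have lxy: "lt le x y" using XY(5) x y unfolding set_less_def by blast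
    have "x \<in> ?A \<union> ?B" "y \<in> ?A \<union> ?B" using XY(1) x y by blast+
    then show "y \<in> ?B"
      using level_lt[OF _ _ lxy, of Q i i] level_lt[OF _ _ lxy, of Q "Suc i" i] by auto
  qed
  have disj: "?A \<inter> ?B = {}" using level_disj_lt[of _ Q le i "Suc i"] by blast
  have "?A = X" using XA YB XY(1) disj by blast
  moreover have "?B = Y" using XA YB XY(1) disj by blast
  ultimately show ?thesis using XY by simp
qed

lemma crown_chain:
  assumes "crown4_stack le Q" "partial_order_on_set Q le"
  shows "i < j \<Longrightarrow> j \<le> height Q le \<Longrightarrow> set_less le (level Q le i) (level Q le j)"
proof (induct j)
  case 0 then show ?case by simp
next
  case (Suc j)
  have st: "set_less le (level Q le j) (level Q le (Suc j)) \<and> card (level Q le j) = 2"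
    using crown_step[OF assms(1)] Suc.prems by simp
  show ?case
  proof (cases "i = j")
    case True then show ?thesis using st by simp
  next
    case False
    then have ih: "set_less le (level Q le i) (level Q le j)" using Suc by simp
    obtain z where z: "z \<in> level Q le j" using st by fastforce
    show ?thesis unfolding set_less_def
    proof (intro ballI)
      fix x b assume x: "x \<in> level Q le i" and b: "b \<in> level Q le (Suc j)"
      have "lt le x z" using ih x z unfolding set_less_def by blast
      moreover have "lt le z b" using st z b unfolding set_less_def by blast
      ultimately show "lt le x b" using lt_trans[OF assms(2)] x z b level_subset[of Q le i] level_subset[of Q le j] level_subset[of Q le "Suc j"] by blast
    qed
  qed
qed

lemma good_props:
  assumes g: "two_antichain le Q \<or> crown4_stack le Q" and fin: "finite Q"
    and po: "partial_order_on_set Q le"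
  shows "card (level Q le 0) = 2"
    and "\<forall>x\<in>Q. x \<in> level Q le 0 \<or> (\<forall>b\<in>level Q le 0. lt le b x)"
    and "\<forall>x\<in>Q. x \<in> level Q le (height Q le) \<or> (\<forall>b\<in>level Q le (height Q le). lt le x b)"
    and "level Q le (height Q le) \<noteq> {}"
proof -
  have "card (level Q le 0) = 2 \<and>
    (\<forall>x\<in>Q. x \<in> level Q le 0 \<or> (\<forall>b\<in>level Q le 0. lt le b x)) \<and>
    (\<forall>x\<in>Q. x \<in> level Q le (height Q le) \<or> (\<forall>b\<in>level Q le (height Q le). lt le x b)) \<and>
    level Q le (height Q le) \<noteq> {}"
  proof (cases "two_antichain le Q")
    case True
    then have ac: "antichain le Q" "card Q = 2" unfolding two_antichain_def by auto
    then have "Q \<noteq> {}" by auto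
    then have "height Q le = 0" using antichain_height[OF ac(1) _ po] by simp
    then show ?thesis using antichain_level0[OF ac(1)] ac(2) \<open>Q \<noteq> {}\<close> by simp
  next
    case False
    then have cs: "crown4_stack le Q" using g by simp
    let ?H = "height Q le"
    have H1: "?H \<ge> 1" using cs unfolding crown4_stack_def by simp
    have c0: "card (level Q le 0) = 2" using crown_step[OF cs, of 0] H1 by simp
    have cH: "card (level Q le ?H) = 2" using crown_step[OF cs, of "?H - 1"] H1 by simp
    have p2: "\<forall>x\<in>Q. x \<in> level Q le 0 \<or> (\<forall>b\<in>level Q le 0. lt le b x)"
    proof
      fix x assume x: "x \<in> Q"
      obtain i where i: "i \<le> ?H" "x \<in> level Q le i" using cover[OF fin po x] by blast
      show "x \<in> level Q le 0 \<or> (\<forall>b\<in>level Q le 0. lt le b x)"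
      proof (cases "i = 0")
        case True then show ?thesis using i by simp
      next
        case False
        then have "set_less le (level Q le 0) (level Q le i)" using crown_chain[OF cs po, of 0 i] i by simp
        then show ?thesis using i unfolding set_less_def by blast
      qed
    qed
    have p3: "\<forall>x\<in>Q. x \<in> level Q le ?H \<or> (\<forall>b\<in>level Q le ?H. lt le x b)"
    proof
      fix x assume x: "x \<in> Q"
      obtain i where i: "i \<le> ?H" "x \<in> level Q le i" using cover[OF fin po x] by blast
      show "x \<in> level Q le ?H \<or> (\<forall>b\<in>level Q le ?H. lt le x b)"
      proof (cases "i = ?H")
        case True then show ?thesis using i by simp
      next
        case False
        then have "set_less le (level Q le i) (level Q le ?H)" using crown_chain[OF cs po, of i ?H] i by simp
        then show ?thesis using i unfolding set_less_def by blast
      qed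
    qed
    have "level Q le ?H \<noteq> {}" using cH by auto
    then show ?thesis using c0 p2 p3 by blast
  qed
  then show "card (level Q le 0) = 2"
    and "\<forall>x\<in>Q. x \<in> level Q le 0 \<or> (\<forall>b\<in>level Q le 0. lt le b x)"
    and "\<forall>x\<in>Q. x \<in> level Q le (height Q le) \<or> (\<forall>b\<in>level Q le (height Q le). lt le x b)"
    and "level Q le (height Q le) \<noteq> {}" by blast+
qed


lemma finite_carrier3: "finite (carrier3 h)"
proof -
  have "carrier3 h \<subseteq> {..h} \<times> {..<3}" unfolding carrier3_def by auto
  then show ?thesis by (rule finite_subset) simp
qed

lemma horizon2:
  assumes "finite A" "partial_order_on_set A le" "horizon A le = 2"
  shows "has_horizon A le 2"
proof -
  have "has_horizon A le (Suc (height A le))"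
    unfolding has_horizon_def set_less_def
    using level_beyond_empty[OF assms(1,2)] by (metis add_leD2 empty_iff less_eq_Suc_le)
  then have "has_horizon A le (LEAST n. has_horizon A le n)" by (rule LeastI)
  then show ?thesis using assms(3) unfolding horizon_def by simp
qed

theorem proposition6p3:
  fixes h k :: nat
    and le :: "nat \<times> nat \<Rightarrow> nat \<times> nat \<Rightarrow> bool"
    and U :: "(nat \<times> nat) set"
    and s t :: "nat \<times> nat \<Rightarrow> nat \<times> nat"
  defines "P \<equiv> carrier3 h"
  defines "S \<equiv> s ` (levels_between P le 0 k - U)"
  defines "T \<equiv> t ` levels_between P le (Suc k) h"
  assumes "N2 h le"
    and "retractive_up_split h le k U s t"
  shows "(\<exists>r. retraction P le r \<and> r ` P = S \<union> T \<and> set_less le S T \<and>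
             (\<forall>x \<in> levels_between P le 0 k - U. r x = s x) \<and>
             (\<forall>x \<in> U. r x \<in> T) \<and>
             (\<forall>x \<in> levels_between P le (Suc k) h. r x = t x))
         \<longleftrightarrow>
         (set_less le (level S le (height S le)) (level T le 0) \<and>
          (\<forall>u \<in> U. \<exists>v \<in> level T le 0.
             \<forall>p \<in> levels_between P le (Suc k) h. t p = v \<longrightarrow> \<not> lt le u p))"
proof -
  define D where "D = levels_between P le 0 k - U"
  define E where "E = levels_between P le (Suc k) h"
  define T0 where "T0 = level T le 0"
  define ST where "ST = level S le (height S le)"
  have po: "partial_order_on_set P le" and hP: "height P le = h" and hor0: "horizon P le = 2"
    using assms(4) unfolding N2_def section3_def P_def by auto
  have finP: "finite P" unfolding P_def by (rule finite_carrier3)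
  have hor: "has_horizon P le 2" by (rule horizon2[OF finP po hor0])
  have split: "k \<le> h - 1" "U \<subseteq> levels_between P le 0 k" "retraction D le s" "retraction E le t"
    "two_antichain le S \<or> crown4_stack le S" "two_antichain le T \<or> crown4_stack le T"
    using assms(5) unfolding retractive_up_split_def Let_def P_def[symmetric] S_def T_def D_def E_def
    by auto
  have SD: "S = s ` D" and TE: "T = t ` E" unfolding S_def T_def D_def E_def by auto
  have DP: "D \<subseteq> P" and EP: "E \<subseteq> P" and UP: "U \<subseteq> P"
    unfolding D_def E_def using split(2) levels_between_subset[of P le] by blast+
  have sD: "\<forall>x\<in>D. s x \<in> D" and ssD: "\<forall>x\<in>D. s (s x) = s x"
    and smono: "\<forall>x\<in>D. \<forall>y\<in>D. le x y \<longrightarrow> le (s x) (s y)"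
    using split(3) unfolding retraction_def by auto
  have tE: "\<forall>x\<in>E. t x \<in> E" and ttE: "\<forall>x\<in>E. t (t x) = t x"
    and tmono: "\<forall>x\<in>E. \<forall>y\<in>E. le x y \<longrightarrow> le (t x) (t y)"
    using split(4) unfolding retraction_def by auto
  have SsubD: "S \<subseteq> D" using SD sD by auto
  have TsubE: "T \<subseteq> E" using TE tE by auto
  have tfix: "\<And>y. y \<in> T \<Longrightarrow> t y = y" using TE ttE by auto
  have sfix: "\<And>y. y \<in> S \<Longrightarrow> s y = y" using SD ssD by auto
  have finS: "finite S" and finT: "finite T"
    using finite_subset[OF _ finP] SsubD TsubE DP EP by blast+
  have poS: "partial_order_on_set S le" and poT: "partial_order_on_set T le"
    using po_subset[OF po] SsubD TsubE DP EP by blast+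
  note gS = good_props[OF split(5) finS poS]
  note gT = good_props[OF split(6) finT poT]
  have T0T: "T0 \<subseteq> T" and STS: "ST \<subseteq> S" unfolding T0_def ST_def using level_subset[of T le 0] level_subset[of S le "height S le"] by blast+
  have T0mins: "\<And>v y. v \<in> T0 \<Longrightarrow> y \<in> T \<Longrightarrow> \<not> lt le y v"
    unfolding T0_def level_def mins_def by simp
  have card2: "\<And>v w z. v \<in> T0 \<Longrightarrow> w \<in> T0 \<Longrightarrow> v \<noteq> w \<Longrightarrow> z \<in> T0 \<Longrightarrow> z = v \<or> z = w"
    using gT(1) unfolding T0_def[symmetric] card_2_iff by blast
  obtain x0 y0 where xy0: "T0 = {x0, y0}" "x0 \<noteq> y0"
    using gT(1) unfolding T0_def[symmetric] card_2_iff by blast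
  have other: "\<And>v. \<exists>w\<in>T0. w \<noteq> v"
  proof -
    fix v show "\<exists>w\<in>T0. w \<noteq> v" using xy0 by (cases "x0 = v") auto
  qed
  have cov: "P = D \<union> U \<union> E"
  proof
    show "P \<subseteq> D \<union> U \<union> E"
    proof
      fix x assume x: "x \<in> P"
      obtain i where "i \<le> h" "x \<in> level P le i" using cover[OF finP po x] hP by blast
      then show "x \<in> D \<union> U \<union> E" unfolding D_def E_def
        by (cases "i \<le> k") (auto simp: levels_between_iff)
    qed
  qed (use DP UP EP in blast)
  have lowlvl0: "\<And>z. z \<in> D \<union> U \<Longrightarrow> \<exists>i\<le>k. z \<in> level P le i"
  proof -
    fix z assume "z \<in> D \<union> U"
    then have "z \<in> levels_between P le 0 k" using split(2) unfolding D_def by blast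
    then show "\<exists>i\<le>k. z \<in> level P le i" unfolding levels_between_iff by blast
  qed
  have lowE: "\<And>x. x \<in> D \<union> U \<Longrightarrow> x \<notin> E"
  proof -
    fix x assume "x \<in> D \<union> U"
    then obtain i where i: "i \<le> k" "x \<in> level P le i"
      using lowlvl0 by blast
    show "x \<notin> E"
    proof
      assume "x \<in> E"
      then obtain j where j: "Suc k \<le> j" "x \<in> level P le j" unfolding E_def levels_between_iff by blast
      have "i = j" using level_disj[OF i(2) j(2)] .
      then show False using i(1) j(1) by simp
    qed
  qed
  have DU: "D \<inter> U = {}" unfolding D_def by blast
  have covP: "\<And>x. x \<in> P \<Longrightarrow> x \<in> D \<or> x \<in> U \<or> x \<in> E"
  proof -
    fix x assume "x \<in> P"
    then have "x \<in> D \<union> U \<union> E" by (subst cov[symmetric])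
    then show "x \<in> D \<or> x \<in> U \<or> x \<in> E" by blast
  qed
  show ?thesis
  proof
    assume "\<exists>r. retraction P le r \<and> r ` P = S \<union> T \<and> set_less le S T \<and>
             (\<forall>x \<in> levels_between P le 0 k - U. r x = s x) \<and>
             (\<forall>x \<in> U. r x \<in> T) \<and>
             (\<forall>x \<in> levels_between P le (Suc k) h. r x = t x)"
    then obtain r where r: "retraction P le r" "set_less le S T" "\<forall>x \<in> U. r x \<in> T"
      "\<forall>x \<in> E. r x = t x" unfolding E_def by blast
    have rmono: "\<forall>x\<in>P. \<forall>y\<in>P. le x y \<longrightarrow> le (r x) (r y)" using r(1) unfolding retraction_def by blast
    have A: "set_less le ST T0" using r(2) STS T0T unfolding set_less_def by blast
    have B: "\<forall>u \<in> U. \<exists>v \<in> T0. \<forall>p \<in> E. t p = v \<longrightarrow> \<not> lt le u p"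
    proof
      fix u assume u: "u \<in> U"
      obtain v where v: "v \<in> T0" "v \<noteq> r u" using other by blast
      have "\<forall>p \<in> E. t p = v \<longrightarrow> \<not> lt le u p"
      proof (intro ballI impI notI)
        fix p assume p: "p \<in> E" "t p = v" "lt le u p"
        have "le (r u) (r p)" using rmono u p UP EP unfolding lt_def by blast
        then have "lt le (r u) v" using r(4) p v unfolding lt_def by auto
        then show False using T0mins[OF v(1)] r(3) u by blast
      qed
      then show "\<exists>v \<in> T0. \<forall>p \<in> E. t p = v \<longrightarrow> \<not> lt le u p" using v by blast
    qed
    show "set_less le (level S le (height S le)) (level T le 0) \<and>
          (\<forall>u \<in> U. \<exists>v \<in> level T le 0.
             \<forall>p \<in> levels_between P le (Suc k) h. t p = v \<longrightarrow> \<not> lt le u p)"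
      using A B unfolding ST_def T0_def E_def by blast
  next
    assume "set_less le (level S le (height S le)) (level T le 0) \<and>
          (\<forall>u \<in> U. \<exists>v \<in> level T le 0.
             \<forall>p \<in> levels_between P le (Suc k) h. t p = v \<longrightarrow> \<not> lt le u p)"
    then have A: "set_less le ST T0" and B: "\<forall>u \<in> U. \<exists>v \<in> T0. \<forall>p \<in> E. t p = v \<longrightarrow> \<not> lt le u p"
      unfolding ST_def T0_def E_def by blast+
    have Uk: "\<And>u. u \<in> U \<Longrightarrow> u \<in> level P le k"
    proof -
      fix u assume u: "u \<in> U"
      obtain i where i: "i \<le> k" "u \<in> level P le i" using lowlvl0 u by blast
      obtain v where v: "v \<in> T0" "\<forall>p \<in> E. t p = v \<longrightarrow> \<not> lt le u p" using B u by blast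
      have vE: "v \<in> E" using v(1) T0T TsubE by blast
      then obtain j where j: "Suc k \<le> j" "v \<in> level P le j" unfolding E_def levels_between_iff by blast
      show "u \<in> level P le k"
      proof (rule ccontr)
        assume "u \<notin> level P le k"
        then have "i + 2 \<le> j" using i j by (cases "i = k") auto
        then have "lt le u v" using hor i(2) j(2) unfolding has_horizon_def set_less_def by blast
        moreover have "t v = v" using tfix v(1) T0T by blast
        ultimately show False using v(2) vE by blast
      qed
    qed
    have Wex: "\<And>u. u \<in> U \<Longrightarrow> \<exists>w. w \<in> T0 \<and> (\<forall>p\<in>E. lt le u p \<longrightarrow> le w (t p))"
    proof -
      fix u assume u: "u \<in> U"
      obtain v where v: "v \<in> T0" "\<forall>p \<in> E. t p = v \<longrightarrow> \<not> lt le u p" using B u by blast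
      obtain w where w: "w \<in> T0" "w \<noteq> v" using other by blast
      have "\<forall>p\<in>E. lt le u p \<longrightarrow> le w (t p)"
      proof (intro ballI impI)
        fix p assume p: "p \<in> E" "lt le u p"
        have tpT: "t p \<in> T" using p TE by blast
        have ne: "t p \<noteq> v" using v(2) p by blast
        show "le w (t p)"
        proof (cases "t p \<in> T0")
          case True
          then have "t p = w" using card2[OF v(1) w(1) w(2)[symmetric]] ne by blast
          then show ?thesis using po w T0T TsubE EP unfolding partial_order_on_set_def by blast
        next
          case False
          then have "\<forall>b\<in>T0. lt le b (t p)" using gT(2) tpT unfolding T0_def by blast
          then show ?thesis using w unfolding lt_def by blast
        qed
      qed
      then show "\<exists>w. w \<in> T0 \<and> (\<forall>p\<in>E. lt le u p \<longrightarrow> le w (t p))" using w by blast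
    qed
    define W where "W u = (SOME w. w \<in> T0 \<and> (\<forall>p\<in>E. lt le u p \<longrightarrow> le w (t p)))" for u
    have W: "\<And>u. u \<in> U \<Longrightarrow> W u \<in> T0 \<and> (\<forall>p\<in>E. lt le u p \<longrightarrow> le (W u) (t p))"
      unfolding W_def by (rule someI_ex, rule Wex)
    have WT: "\<And>u. u \<in> U \<Longrightarrow> W u \<in> T" using W T0T by blast
    have ST_lt: "set_less le S T" unfolding set_less_def
    proof (intro ballI)
      fix a b assume a: "a \<in> S" and b: "b \<in> T"
      obtain a' where a': "a' \<in> ST" "le a a'"
      proof (cases "a \<in> ST")
        case True
        then show ?thesis using that po a SsubD DP unfolding partial_order_on_set_def by blast
      next
        case False
        obtain a' where "a' \<in> ST" using gS(4) unfolding ST_def by blast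
        then show ?thesis using that gS(3) a False unfolding ST_def lt_def by blast
      qed
      obtain b' where b': "b' \<in> T0" "le b' b"
      proof (cases "b \<in> T0")
        case True
        then show ?thesis using that po b TsubE EP unfolding partial_order_on_set_def by blast
      next
        case False
        obtain b' where "b' \<in> T0" using other by blast
        then show ?thesis using that gT(2) b False unfolding T0_def lt_def by blast
      qed
      have "lt le a' b'" using A a'(1) b'(1) unfolding set_less_def by blast
      moreover have "a \<in> P" "a' \<in> P" "b \<in> P" "b' \<in> P"
        using a a'(1) b b'(1) STS T0T SsubD TsubE DP EP by blast+
      ultimately show "lt le a b" using le_lt_le[OF po] a'(2) b'(2) by blast
    qed
    define r where "r x = (if x \<in> D then s x else if x \<in> E then t x else W x)" for x
    have rD: "\<And>x. x \<in> D \<Longrightarrow> r x = s x" unfolding r_def by simp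
    have rE: "\<And>x. x \<in> E \<Longrightarrow> r x = t x" unfolding r_def using lowE by auto
    have rU: "\<And>x. x \<in> U \<Longrightarrow> r x = W x" unfolding r_def using lowE DU by auto
    have rP: "\<And>x. x \<in> P \<Longrightarrow> r x \<in> P"
    proof -
      fix x assume x: "x \<in> P"
      consider "x \<in> D" | "x \<in> U" | "x \<in> E" using covP[OF x] by blast
      then show "r x \<in> P"
      proof cases
        case 1 show ?thesis unfolding rD[OF 1] using subsetD[OF DP bspec[OF sD 1]] .
      next
        case 2 show ?thesis unfolding rU[OF 2] using subsetD[OF EP subsetD[OF TsubE WT[OF 2]]] .
      next
        case 3 show ?thesis unfolding rE[OF 3] using subsetD[OF EP bspec[OF tE 3]] .
      qed
    qed
    have ret: "retraction P le r"
      unfolding retraction_def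
    proof (intro conjI ballI impI)
      fix x assume x: "x \<in> P"
      show "r x \<in> P" using rP x .
      show "r (r x) = r x"
      proof -
        consider "x \<in> D" | "x \<in> U" | "x \<in> E" using covP[OF x] by blast
        then show ?thesis
        proof cases
          case 1 then show ?thesis using rD[OF 1] rD[of "s x"] sD ssD by simp
        next
          case 2
          have "W x \<in> E" using WT[OF 2] TsubE by blast
          then show ?thesis using rU[OF 2] rE[of "W x"] tfix[OF WT[OF 2]] by simp
        next
          case 3 then show ?thesis using rE[OF 3] rE[of "t x"] tE ttE by simp
        qed
      qed
    next
      fix x y assume x: "x \<in> P" and y: "y \<in> P" and xy: "le x y"
      show "le (r x) (r y)"
      proof (cases "x = y")
        case True
        have "r x \<in> P" using rP x .
        then show ?thesis using po True unfolding partial_order_on_set_def by blast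
      next
        case False
        then have lxy: "lt le x y" using xy unfolding lt_def by simp
        have lvl: "\<And>i j. x \<in> level P le i \<Longrightarrow> y \<in> level P le j \<Longrightarrow> i < j"
          using level_lt[of x P le _ y _, OF _ _ lxy] by blast
        have Elvl: "\<And>z. z \<in> E \<Longrightarrow> \<exists>i\<ge>Suc k. z \<in> level P le i"
          unfolding E_def levels_between_iff by blast
        have SlT: "\<And>a b. a \<in> S \<Longrightarrow> b \<in> T \<Longrightarrow> le a b"
          using ST_lt unfolding set_less_def lt_def by blast
        consider "x \<in> D" | "x \<in> U" | "x \<in> E" using covP[OF x] by blast
        then show ?thesis
        proof cases
          case 1
          note xD = 1
          consider "y \<in> D" | "y \<in> U" | "y \<in> E" using covP[OF y] by blast
          then show ?thesis
          proof cases
            case 1 show ?thesis unfolding rD[OF xD] rD[OF 1] using smono xD 1 xy by blast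
          next
            case 2
            have "s x \<in> S" using SD xD by blast
            show ?thesis unfolding rD[OF xD] rU[OF 2] using SlT[OF \<open>s x \<in> S\<close> WT[OF 2]] .
          next
            case 3
            have "s x \<in> S" using SD xD by blast
            have "t y \<in> T" using TE 3 by blast
            show ?thesis unfolding rD[OF xD] rE[OF 3] using SlT[OF \<open>s x \<in> S\<close> \<open>t y \<in> T\<close>] .
          qed
        next
          case 2
          note xU = 2
          then have xk: "x \<in> level P le k" using Uk by blast
          consider "y \<in> D \<union> U" | "y \<in> E" using covP[OF y] by blast
          then show ?thesis
          proof cases
            case 1
            then obtain j where j: "j \<le> k" "y \<in> level P le j" using lowlvl0 by blast
            have "k < j" using lvl[OF xk j(2)] .
            then show ?thesis using j(1) by simp
          next
            case 2
            have "le (W x) (t y)" using W[OF xU] 2 lxy by blast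
            then show ?thesis unfolding rU[OF xU] rE[OF 2] .
          qed
        next
          case 3
          note xE = 3
          consider "y \<in> D \<union> U" | "y \<in> E" using covP[OF y] by blast
          then show ?thesis
          proof cases
            case 1
            then obtain j where j: "j \<le> k" "y \<in> level P le j" using lowlvl0 by blast
            obtain i where i: "Suc k \<le> i" "x \<in> level P le i" using Elvl[OF xE] by blast
            have "i < j" using lvl[OF i(2) j(2)] .
            then show ?thesis using i(1) j(1) by simp
          next
            case 2 show ?thesis unfolding rE[OF xE] rE[OF 2] using tmono xE 2 xy by blast
          qed
        qed
      qed
    qed
    have img: "r ` P = S \<union> T"
    proof
      show "r ` P \<subseteq> S \<union> T"
      proof
        fix z assume "z \<in> r ` P"
        then obtain x where x: "x \<in> P" "z = r x" by blast
        consider "x \<in> D" | "x \<in> U" | "x \<in> E" using covP[OF x(1)] by blast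
        then show "z \<in> S \<union> T"
        proof cases
          case 1 then show ?thesis using x(2) rD[OF 1] SD by simp
        next
          case 2 then show ?thesis using x(2) rU[OF 2] WT[OF 2] by simp
        next
          case 3 then show ?thesis using x(2) rE[OF 3] TE by simp
        qed
      qed
      show "S \<union> T \<subseteq> r ` P"
      proof
        fix z assume "z \<in> S \<union> T"
        then consider "z \<in> S" | "z \<in> T" by blast
        then show "z \<in> r ` P"
        proof cases
          case 1 then obtain d where "d \<in> D" "z = s d" using SD by blast
          then show ?thesis using rD DP by (metis image_eqI subsetD)
        next
          case 2 then obtain e where "e \<in> E" "z = t e" using TE by blast
          then show ?thesis using rE EP by (metis image_eqI subsetD)
        qed
      qed
    qed
    show "\<exists>r. retraction P le r \<and> r ` P = S \<union> T \<and> set_less le S T \<and>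
             (\<forall>x \<in> levels_between P le 0 k - U. r x = s x) \<and>
             (\<forall>x \<in> U. r x \<in> T) \<and>
             (\<forall>x \<in> levels_between P le (Suc k) h. r x = t x)"
      using ret img ST_lt rD rU WT rE unfolding D_def E_def by (intro exI[of _ r]) auto
  qed
qed

end
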